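(* Let $p$ be a prime with $p\equiv1\pmod 3$, $f=\frac{p-1}{3}$, $G\cong C_p$ with generator $a$, and $l$ a primitive root modulo $p$. For $i\in\{1,2,3\}$ let $X_i=\{a^{l^{3j+(i-1)}}:j=0,\dots,f-1\}$, and for $i,j,k\in\{1,2,3\}$ let $c_{ij}^k$ be the number of pairs $(x,y)\in X_i\times X_j$ with $xy=z$, for a fixed $z\in X_k$ (this number does not depend on $z$). For $i\in\{1,2\}$ let $T_i=\{c_{11}^1+2(i-1),c_{11}^2,c_{11}^3\}$. Then $|T_i|\in\{2,3\}$, and $|T_i|=2$ if and only if $p=t^2+3i^2$ for some integer $t$. *)

theory Defs
  imports "HOL-Algebra.Group" "HOL-Number_Theory.Residue_Primitive_Roots"
begin

definition cyc_class :: "('g, 'b) monoid_scheme \<Rightarrow> 'g \<Rightarrow> nat \<Rightarrow> nat \<Rightarrow> nat \<Rightarrow> 'g set" where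
  "cyc_class G a l p i = {a [^]\<^bsub>G\<^esub> (l ^ (3 * j + (i - 1))) | j. j < (p - 1) div 3}"

definition cyc_count :: "('g, 'b) monoid_scheme \<Rightarrow> 'g \<Rightarrow> nat \<Rightarrow> nat \<Rightarrow> nat \<Rightarrow> nat \<Rightarrow> 'g \<Rightarrow> nat" where
  "cyc_count G a l p i j z =
     card {(x, y). x \<in> cyc_class G a l p i \<and> y \<in> cyc_class G a l p j \<and> x \<otimes>\<^bsub>G\<^esub> y = z}"

end

theory Submission
  imports Defs "HOL-Algebra.Multiplicative_Group"
begin

lemma less3: "(i::nat) < 3 \<longleftrightarrow> i = 0 \<or> i = 1 \<or> i = 2" by auto

lemma card_filter_sum: "finite A \<Longrightarrow> card {x\<in>A. P x} = (\<Sum>x\<in>A. if P x then 1 else (0::nat))"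
  by (simp add: sum.If_cases Int_def)



lemma fc:
  fixes e k \<sigma> t u v :: int
  assumes "e \<in> {1,-1}" "k \<in> {1,-1}" "\<sigma> \<in> {1,-1,2,-2}" "u = e*t - 3*k*\<sigma>" "v = e*\<sigma> + k*t"
    "u mod 3 = 1" "v mod 3 = 0"
  shows "u - v = 16 - 12*\<bar>\<sigma>\<bar> \<or> u + v = 16 - 12*\<bar>\<sigma>\<bar>"
  using assms by (auto; presburger)

lemma caseA:
  fixes t \<sigma> u v :: int and P :: int
  assumes P: "P = t^2 + 3*\<sigma>^2" "4 * P = u^2 + 3*v^2" "P > 0" "P dvd t*v - \<sigma>*u"
  shows "\<exists>e k. (e, k) \<in> {(2,0),(-2,0),(1,1),(1,-1),(-1,1),(-1,-1)} \<and> u = e*t - 3*k*\<sigma> \<and> v = e*\<sigma> + k*t"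
proof -
  obtain k where Y: "t*v - \<sigma>*u = P * k" using P(4) by (elim dvdE)
  define X where "X = t*u + 3*\<sigma>*v"
  have idX: "X^2 + 3*(t*v - \<sigma>*u)^2 = (t^2 + 3*\<sigma>^2) * (u^2 + 3*v^2)"
    unfolding X_def by (simp add: power2_eq_square algebra_simps)
  have "X^2 + 3*(P*k)^2 = P * (4 * P)" using idX unfolding Y P(1)[symmetric] P(2)[symmetric] .
  then have XY: "X^2 + 3*(P*k)^2 = 4 * P^2" by (simp add: power2_eq_square)
  have k2: "k^2 \<le> 1"
  proof (rule ccontr)
    assume "\<not> k^2 \<le> 1"
    then have "k^2 \<ge> 2" by simp
    then have "P^2 * k^2 \<ge> P^2 * 2" using P(3) by (intro mult_left_mono) auto
    moreover have "X^2 \<ge> 0" by simp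
    moreover have "(P*k)^2 = P^2*k^2" by (simp add: power_mult_distrib)
    moreover have "P^2 > 0" using P(3) by simp
    ultimately show False using XY by linarith
  qed
  have "\<not> k \<ge> 2"
  proof
    assume "k \<ge> 2"
    then have "k * k \<ge> 2 * 2" by (intro mult_mono) auto
    then show False using k2 by (simp add: power2_eq_square)
  qed
  moreover have "\<not> k \<le> -2"
  proof
    assume "k \<le> -2"
    then have "(-k) * (-k) \<ge> 2 * 2" by (intro mult_mono) auto
    then show False using k2 by (simp add: power2_eq_square)
  qed
  ultimately have kc: "k = 0 \<or> k = 1 \<or> k = -1" by linarith
  have "P*u = t*X - 3*\<sigma>*(t*v - \<sigma>*u)" unfolding X_def P(1) by (simp add: power2_eq_square algebra_simps)
  then have Pu: "P*u = t*X - 3*\<sigma>*(P*k)" by (simp only: Y)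
  have "P*v = \<sigma>*X + t*(t*v - \<sigma>*u)" unfolding X_def P(1) by (simp add: power2_eq_square algebra_simps)
  then have Pv: "P*v = \<sigma>*X + t*(P*k)" by (simp only: Y)
  have "\<exists>e. (((e = 2 \<or> e = -2) \<and> k = 0) \<or> ((e = 1 \<or> e = -1) \<and> (k = 1 \<or> k = -1))) \<and> X = e * P"
  proof (cases "k = 0")
    case True
    then have "X^2 = (2*P)^2" using XY by (simp add: power_mult_distrib)
    then have "X = 2*P \<or> X = -(2*P)" using power2_eq_iff by blast
    then show ?thesis using True by auto
  next
    case False
    then have "k^2 = 1" using kc by auto
    then have "X^2 = P^2" using XY by (simp add: power_mult_distrib)
    then have "X = P \<or> X = -P" using power2_eq_iff by blast
    then show ?thesis using False kc by (metis mult_1 mult_minus_left)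
  qed
  then obtain e where e: "((e = 2 \<or> e = -2) \<and> k = 0) \<or> ((e = 1 \<or> e = -1) \<and> (k = 1 \<or> k = -1))" and X: "X = e * P"
    by blast
  have "P * u = P * (e*t - 3*k*\<sigma>)" using Pu X by (simp add: algebra_simps)
  then have u: "u = e*t - 3*k*\<sigma>" using P(3) by simp
  have "P * v = P * (e*\<sigma> + k*t)" using Pv X by (simp add: algebra_simps)
  then have v: "v = e*\<sigma> + k*t" using P(3) by simp
  show ?thesis using e u v by (intro exI[of _ e] exI[of _ k]) auto
qed

lemma finish:
  fixes e k \<sigma> t u v :: int
  assumes ek: "(e, k) \<in> {(2,0),(-2,0),(1,1),(1,-1),(-1,1),(-1,-1)}" and sg: "\<sigma> \<in> {1,-1,2,-2}"
    and u: "u = e*t - 3*k*\<sigma>" and v: "v = e*\<sigma> + k*t" and um: "u mod 3 = 1" and vm: "v mod 3 = 0"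
  shows "u - v = 16 - 12*\<bar>\<sigma>\<bar> \<or> u + v = 16 - 12*\<bar>\<sigma>\<bar>"
proof (cases "k = 0")
  case True
  then have "v = 2*\<sigma> \<or> v = -2*\<sigma>" using ek v by auto
  moreover have "(2*\<sigma>) mod 3 \<noteq> 0" "(-2*\<sigma>) mod 3 \<noteq> 0" using sg by auto
  ultimately show ?thesis using vm by auto
next
  case False
  then have "e \<in> {1,-1}" "k \<in> {1,-1}" using ek by auto
  then show ?thesis using fc[OF _ _ sg u v um vm] by blast
qed

lemma rep_main:
  fixes t u v :: int and p i :: nat
  assumes pr: "prime p" and tp: "int p = t^2 + 3 * (int i)^2" and up: "4 * int p = u^2 + 3*v^2"
    and um: "u mod 3 = 1" and vm: "v mod 3 = 0" and i: "i \<in> {1,2}"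
  shows "u - v = 16 - 12 * int i \<or> u + v = 16 - 12 * int i"
proof -
  define s where "s = int i"
  have tp': "int p = t^2 + 3 * s^2" using tp unfolding s_def .
  have "(t*v - s*u) * (t*v + s*u) = t^2 * v^2 - s^2 * u^2" by (simp add: power2_eq_square algebra_simps)
  also have "\<dots> = (int p - 3 * s^2) * v^2 - s^2 * (4 * int p - 3 * v^2)"
  proof -
    have t2: "t^2 = int p - 3*s^2" using tp' by simp
    have u2: "u^2 = 4*int p - 3*v^2" using up by simp
    show ?thesis by (simp only: t2 u2)
  qed
  also have "\<dots> = int p * (v^2 - 4 * s^2)" by (simp add: power2_eq_square algebra_simps)
  finally have "int p dvd (t*v - s*u) * (t*v + s*u)" by simp
  moreover have "prime (int p)" using pr by simp
  ultimately have "int p dvd t*v - s*u \<or> int p dvd t*v + s*u"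
    using prime_dvd_mult_iff by blast
  then have d: "int p dvd t*v - s*u \<or> int p dvd t*v - (-s)*u" by simp
  have Ppos: "int p > 0" using pr prime_gt_0_nat by simp
  have sg: "s \<in> {1,-1,2,-2}" "-s \<in> {1,-1,2,-2}" using i unfolding s_def by auto
  have as: "\<bar>s\<bar> = int i" "\<bar>-s\<bar> = int i" unfolding s_def by simp_all
  from d show ?thesis
  proof
    assume a1: "int p dvd t*v - s*u"
    from caseA[OF tp' up Ppos a1] obtain e k where
      h: "(e, k) \<in> {(2,0),(-2,0),(1,1),(1,-1),(-1,1),(-1,-1)} \<and> u = e*t - 3*k*s \<and> v = e*s + k*t"
      by (elim exE)
    have "u - v = 16 - 12*\<bar>s\<bar> \<or> u + v = 16 - 12*\<bar>s\<bar>"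
      using h by (intro finish[OF _ sg(1) _ _ um vm]) (simp_all only:)
    then show ?thesis unfolding as(1) .
  next
    assume a2: "int p dvd t*v - (-s)*u"
    have tp'': "int p = t^2 + 3*(-s)^2" using tp' by simp
    from caseA[OF tp'' up Ppos a2] obtain e k where
      h: "(e, k) \<in> {(2,0),(-2,0),(1,1),(1,-1),(-1,1),(-1,-1)} \<and> u = e*t - 3*k*(-s) \<and> v = e*(-s) + k*t"
      by (elim exE)
    have "u - v = 16 - 12*\<bar>-s\<bar> \<or> u + v = 16 - 12*\<bar>-s\<bar>"
      using h by (intro finish[OF _ sg(2) _ _ um vm]) (simp_all only:)
    then show ?thesis unfolding as(2) .
  qed
qed


locale cyc =
  fixes p l :: nat
  assumes prime_p: "prime p" and p3: "p mod 3 = 1" and proot: "residue_primroot p l"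
begin

definition f :: nat where "f = (p - 1) div 3"
definition S :: "nat \<Rightarrow> int set" where "S r = {int (l ^ k mod p) | k. k mod 3 = r}"
definition M :: "int \<Rightarrow> nat \<Rightarrow> nat \<Rightarrow> nat" where
  "M w i j = card {x \<in> S i. (w - x) mod int p \<in> S j}"
definition g :: "nat \<Rightarrow> nat \<Rightarrow> nat" where "g i j = M 1 i j"

lemma p_gt1: "p > 1" using prime_p prime_gt_1_nat by blast
lemma p_eq: "p = 3 * f + 1" using p3 p_gt1 unfolding f_def by presburger
lemma f_pos: "f > 0" using p_eq p_gt1 by (cases f) auto
lemma coprime_pl: "coprime p l" using proot by (simp add: residue_primroot_def)
lemma ord_pl: "ord p l = p - 1" using proot prime_p by (simp add: residue_primroot_def totient_prime)
lemma exp_cong: "[l^a = l^b] (mod p) \<longleftrightarrow> [a = b] (mod (p-1))"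
  using order_divides_expdiff[OF coprime_pl] ord_pl by simp

lemma pow_nz: "l^k mod p \<noteq> 0"
proof
  assume "l^k mod p = 0"
  then have "p dvd l^k" by auto
  moreover have "coprime p (l^k)" using coprime_pl by simp
  ultimately have "p dvd 1" by (meson coprime_common_divisor dvd_refl)
  then show False using p_gt1 by simp
qed

lemma pow_cover: "0 < x \<Longrightarrow> x < p \<Longrightarrow> \<exists>k. l^k mod p = x"
proof -
  assume "0 < x" "x < p"
  then have "x \<in> totatives p" using totatives_prime[OF prime_p] by auto
  then have "x \<in> (\<lambda>i. l ^ i mod p) ` {..<totient p}"
    using residue_primroot_is_generator[OF p_gt1 proot] unfolding bij_betw_def by simp
  then show ?thesis by auto
qed

lemma mod3_cong: "[a = b] (mod (p-1)) \<Longrightarrow> a mod 3 = b mod 3"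
proof -
  assume "[a = b] (mod (p-1))"
  moreover have "p - 1 = 3 * f" using p_eq by simp
  then have "3 dvd p - 1" by simp
  ultimately have "[a = b] (mod 3)" by (rule cong_dvd_modulus_nat)
  then show ?thesis by (simp add: cong_def)
qed

lemma S_iff: "x \<in> S r \<longleftrightarrow> (\<exists>k. x = int (l^k mod p) \<and> k mod 3 = r)"
  by (auto simp: S_def)

lemma pow_in_S: "int (l^k mod p) \<in> S (k mod 3)"
  by (auto simp: S_def)

lemma S_lt3: "x \<in> S r \<Longrightarrow> r < 3"
  by (auto simp: S_def)

lemma S_range: "x \<in> S r \<Longrightarrow> 0 < x \<and> x < int p"
  using pow_nz p_gt1 unfolding S_def by force

lemma S_disj: "x \<in> S r \<Longrightarrow> x \<in> S s \<Longrightarrow> r = s"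
proof -
  assume "x \<in> S r" "x \<in> S s"
  obtain k where k: "x = int (l^k mod p)" "k mod 3 = r" using \<open>x \<in> S r\<close> by (auto simp: S_def)
  obtain k' where k': "x = int (l^k' mod p)" "k' mod 3 = s" using \<open>x \<in> S s\<close> by (auto simp: S_def)
  have "[l^k = l^k'] (mod p)" using k k' by (simp add: cong_def)
  then have "[k = k'] (mod (p-1))" using exp_cong by simp
  then show "r = s" using mod3_cong k k' by simp
qed

lemma S_cover: "0 < x \<Longrightarrow> x < int p \<Longrightarrow> \<exists>r<3. x \<in> S r"
proof -
  assume "0 < x" "x < int p"
  then have "\<exists>k. l^k mod p = nat x" using pow_cover[of "nat x"] by simp
  then obtain k where "l^k mod p = nat x" by blast
  then have "x = int (l^k mod p)" using \<open>0 < x\<close> by simp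
  then show ?thesis using pow_in_S[of k] by (intro exI[of _ "k mod 3"]) auto
qed

lemma S_mult: "x \<in> S r \<Longrightarrow> y \<in> S s \<Longrightarrow> (x * y) mod int p \<in> S ((r + s) mod 3)"
proof -
  assume "x \<in> S r" "y \<in> S s"
  obtain k where k: "x = int (l^k mod p)" "k mod 3 = r" using \<open>x \<in> S r\<close> by (auto simp: S_def)
  obtain k' where k': "y = int (l^k' mod p)" "k' mod 3 = s" using \<open>y \<in> S s\<close> by (auto simp: S_def)
  have "(x * y) mod int p = int (((l^k mod p) * (l^k' mod p)) mod p)"
    using k k' by (simp add: zmod_int)
  also have "\<dots> = int (l^(k+k') mod p)" by (simp add: mod_mult_eq power_add)
  moreover have "(k+k') mod 3 = (r+s) mod 3" by (simp only: k(2)[symmetric] k'(2)[symmetric] mod_add_eq)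
  ultimately show ?thesis using pow_in_S[of "k+k'"] by simp
qed

lemma S_pow: "x \<in> S r \<Longrightarrow> (x ^ n) mod int p \<in> S ((r * n) mod 3)"
proof -
  assume "x \<in> S r"
  then obtain k where k: "x = int (l^k mod p)" "k mod 3 = r" by (auto simp: S_def)
  have "(x ^ n) mod int p = int ((l^k mod p)^n mod p)" using k by (simp add: zmod_int)
  also have "\<dots> = int (l^(k*n) mod p)" by (simp add: power_mod power_mult)
  moreover have "(k*n) mod 3 = (r*n) mod 3" by (simp only: k(2)[symmetric] mod_mult_left_eq)
  ultimately show ?thesis using pow_in_S[of "k*n"] by simp
qed

lemma one_S0: "1 \<in> S 0"
  using pow_in_S[of 0] p_gt1 by simp

lemma f_even: "even f"
proof -
  have "p > 2" using p_eq f_pos by auto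
  then have "odd p" using prime_p by (simp add: prime_odd_nat)
  then have "odd (3 * f + 1)" using p_eq by simp
  then have "even (3 * f)" by simp
  then show ?thesis by simp
qed

lemma neg1_S0: "int p - 1 \<in> S 0"
proof -
  define h where "h = (p - 1) div 2"
  have h3: "h = 3 * (f div 2)" using f_even p_eq unfolding h_def by auto
  have h_pos: "0 < h" "h < p - 1" using f_pos f_even p_eq unfolding h_def by auto
  have h2: "2 * h = p - 1" using f_even p_eq unfolding h_def by auto
  have "[l^(2*h) = l^0] (mod p)" unfolding exp_cong h2 by (simp add: cong_def)
  then have "[(l^h)^2 = 1] (mod p)" by (simp add: power_mult mult.commute)
  then have "[int (l^h)^2 = 1] (mod int p)" by (metis cong_int_iff of_nat_1 of_nat_power)
  then have "int p dvd (int (l^h) - 1) * (int (l^h) + 1)"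
    by (simp add: cong_iff_dvd_diff power2_eq_square algebra_simps)
  moreover have "prime (int p)" using prime_p by simp
  ultimately have "int p dvd int (l^h) - 1 \<or> int p dvd int (l^h) + 1"
    using prime_dvd_mult_iff by blast
  moreover have "\<not> int p dvd int (l^h) - 1"
  proof
    assume "int p dvd int (l^h) - 1"
    then have "[int (l^h) = int 1] (mod int p)" by (simp add: cong_iff_dvd_diff)
    then have "[l^h = l^0] (mod p)" using cong_int_iff by fastforce
    then have "[h = 0] (mod (p-1))" using exp_cong[of h 0] by simp
    then have "(p - 1) dvd h" by (simp add: cong_0_iff)
    then show False using h_pos by (simp add: nat_dvd_not_less)
  qed
  ultimately have "int p dvd int (l^h) + 1" by blast
  then obtain c where c: "int (l^h) + 1 = int p * c" by (elim dvdE)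
  then have "int (l^h) = int p * (c - 1) + (int p - 1)" by (simp add: algebra_simps)
  then have "int (l^h) mod int p = (int p - 1) mod int p" by simp
  also have "\<dots> = int p - 1" using p_gt1 by (intro mod_pos_pos_trivial) auto
  finally have "int (l^h) mod int p = int p - 1" .
  then have "int (l^h mod p) = int p - 1" by (simp add: zmod_int)
  then show ?thesis using pow_in_S[of h] h3 by simp
qed

lemma S_neg: "x \<in> S r \<Longrightarrow> (- x) mod int p \<in> S r"
proof -
  assume x: "x \<in> S r"
  have "((int p - 1) * x) mod int p \<in> S ((0 + r) mod 3)" by (rule S_mult[OF neg1_S0 x])
  moreover have "((int p - 1) * x) mod int p = (- x) mod int p"
  proof -
    have "(int p - 1) * x = (- x) + x * int p" by (simp add: algebra_simps)
    then show ?thesis by (simp only: mod_mult_self1)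
  qed
  ultimately show ?thesis using S_lt3[OF x] by simp
qed

lemma S_alt: "r < 3 \<Longrightarrow> S r = (\<lambda>j. int (l^(3*j+r) mod p)) ` {..<f}"
proof
  assume r: "r < 3"
  show "(\<lambda>j. int (l^(3*j+r) mod p)) ` {..<f} \<subseteq> S r"
    using r by (auto simp: S_def)
  show "S r \<subseteq> (\<lambda>j. int (l^(3*j+r) mod p)) ` {..<f}"
  proof
    fix x assume "x \<in> S r"
    then obtain k where k: "x = int (l^k mod p)" "k mod 3 = r" by (auto simp: S_def)
    define m where "m = k mod (p - 1)"
    have "p - 1 = 3 * f" using p_eq by simp
    then have m_lt: "m < 3 * f" unfolding m_def using f_pos by simp
    have "m mod 3 = k mod 3" unfolding m_def using \<open>p - 1 = 3 * f\<close> by (simp add: mod_mod_cancel)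
    moreover have "m = 3 * (m div 3) + m mod 3" by simp
    ultimately have m_eq: "m = 3 * (m div 3) + r" using k by simp
    have "[m = k] (mod (p-1))" unfolding m_def by (simp add: cong_def)
    then have "l^m mod p = l^k mod p" using exp_cong by (simp add: cong_def)
    moreover have "m div 3 < f" using m_lt by simp
    ultimately show "x \<in> (\<lambda>j. int (l^(3*j+r) mod p)) ` {..<f}"
      using k m_eq by (intro image_eqI[of _ _ "m div 3"]) (metis, simp)
  qed
qed

lemma S_inj: "r < 3 \<Longrightarrow> inj_on (\<lambda>j. int (l^(3*j+r) mod p)) {..<f}"
proof
  fix i j assume r: "r < 3" and ij: "i \<in> {..<f}" "j \<in> {..<f}"
    and eq: "int (l^(3*i+r) mod p) = int (l^(3*j+r) mod p)"
  then have "[l^(3*i+r) = l^(3*j+r)] (mod p)" by (simp add: cong_def)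
  then have "[3*i+r = 3*j+r] (mod (p-1))" using exp_cong by simp
  moreover have "3*i+r < p - 1" "3*j+r < p - 1" using ij r p_eq by auto
  ultimately show "i = j" using cong_less_modulus_unique_nat by fastforce
qed

lemma card_S: "r < 3 \<Longrightarrow> card (S r) = f"
  using S_alt S_inj card_image by (metis card_lessThan)

lemma fin_S: "finite (S r)"
proof (cases "r < 3")
  case True then show ?thesis using S_alt by simp
next
  case False then have "S r = {}" using S_lt3 by blast
  then show ?thesis by simp
qed

lemma S_empty: "\<not> r < 3 \<Longrightarrow> S r = {}" using S_lt3 by blast


lemma eq_mod: "0 \<le> x \<Longrightarrow> x < int p \<Longrightarrow> 0 \<le> y \<Longrightarrow> y < int p \<Longrightarrow> int p dvd x - y \<Longrightarrow> x = y"
  by (metis mod_eq_dvd_iff mod_pos_pos_trivial)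

lemma not_dvd_S: "x \<in> S r \<Longrightarrow> \<not> int p dvd x"
  using S_range by (meson zdvd_not_zless)

lemma dvd_cancel_S: "y \<in> S r \<Longrightarrow> int p dvd a * y \<Longrightarrow> int p dvd a"
proof -
  assume y: "y \<in> S r" and d: "int p dvd a * y"
  have "prime (int p)" using prime_p by simp
  then show ?thesis using d not_dvd_S[OF y] prime_dvd_mult_iff by blast
qed

lemma S_fermat: "x \<in> S r \<Longrightarrow> (x ^ (p - 1)) mod int p = 1"
proof -
  assume "x \<in> S r"
  then obtain k where k: "x = int (l^k mod p)" by (auto simp: S_def)
  have "(x ^ (p-1)) mod int p = int ((l^k mod p)^(p-1) mod p)" using k by (simp add: zmod_int)
  also have "\<dots> = int (l^(k*(p-1)) mod p)" by (simp add: power_mod power_mult)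
  also have "l^(k*(p-1)) mod p = l^0 mod p"
    using exp_cong[of "k*(p-1)" 0] by (simp add: cong_def)
  finally show ?thesis using p_gt1 by simp
qed

definition xinv :: "int \<Rightarrow> int" where "xinv x = (x ^ (p - 2)) mod int p"

lemma p2_mod3: "(p - 2) mod 3 = 2"
proof -
  have "p - 2 = 3 * (f - 1) + 2" using p_eq f_pos by (cases f) auto
  moreover have "(3 * (f - 1) + 2) mod 3 = (2::nat)" by (simp only: mod_mult_self4) simp
  ultimately show ?thesis by simp
qed

lemma xinv_S: "x \<in> S r \<Longrightarrow> xinv x \<in> S ((3 - r) mod 3)"
proof -
  assume x: "x \<in> S r"
  have r: "r < 3" using S_lt3[OF x] .
  have "(r * (p - 2)) mod 3 = (r * 2) mod 3" using p2_mod3 by (metis mod_mult_right_eq)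
  also have "\<dots> = (3 - r) mod 3" using r by (cases r; cases "r - 1"; simp)
  finally show ?thesis using S_pow[OF x, of "p-2"] unfolding xinv_def by simp
qed

lemma xinv_mult: "x \<in> S r \<Longrightarrow> (x * xinv x) mod int p = 1"
proof -
  assume x: "x \<in> S r"
  have "(x * xinv x) mod int p = (x * x ^ (p - 2)) mod int p" unfolding xinv_def by (simp add: mod_mult_right_eq)
  also have "x * x ^ (p - 2) = x ^ (p - 1)"
  proof -
    have "p - 1 = Suc (p - 2)" using p_eq f_pos by simp
    then show ?thesis by (simp only: power_Suc)
  qed
  finally show ?thesis using S_fermat[OF x] by simp
qed

lemma M_scale_le:
  assumes t: "t \<in> S s" and i: "i < 3" and j: "j < 3"
  shows "M w i j \<le> M ((t * w) mod int p) ((i + s) mod 3) ((j + s) mod 3)"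
proof -
  let ?h = "\<lambda>x. (t * x) mod int p"
  let ?A = "{x \<in> S i. (w - x) mod int p \<in> S j}"
  let ?B = "{x \<in> S ((i + s) mod 3). ((t * w) mod int p - x) mod int p \<in> S ((j + s) mod 3)}"
  have "inj_on ?h ?A"
  proof
    fix x y assume x: "x \<in> ?A" and y: "y \<in> ?A" and eq: "?h x = ?h y"
    then have "int p dvd (x - y) * t" by (simp add: mod_eq_dvd_iff algebra_simps)
    then have "int p dvd x - y" using dvd_cancel_S[OF t] by blast
    moreover have "0 < x" "x < int p" "0 < y" "y < int p" using x y S_range by auto
    ultimately show "x = y" using eq_mod by simp
  qed
  moreover have "?h ` ?A \<subseteq> ?B"
  proof
    fix z assume "z \<in> ?h ` ?A"
    then obtain x where x: "x \<in> S i" "(w - x) mod int p \<in> S j" and z: "z = ?h x" by auto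
    have "z \<in> S ((s + i) mod 3)" using S_mult[OF t x(1)] z by simp
    moreover have "((t * w) mod int p - z) mod int p = (t * ((w - x) mod int p)) mod int p"
      unfolding z by (metis mod_diff_eq mod_mult_right_eq right_diff_distrib)
    moreover have "(t * ((w - x) mod int p)) mod int p \<in> S ((s + j) mod 3)" using S_mult[OF t x(2)] .
    ultimately show "z \<in> ?B" by (simp add: add.commute)
  qed
  moreover have "finite ?B" using fin_S by simp
  ultimately show ?thesis unfolding M_def by (rule card_inj_on_le)
qed

lemma M_scale:
  assumes t: "t \<in> S s" and i: "i < 3" and j: "j < 3" and w: "0 \<le> w" "w < int p"
  shows "M ((t * w) mod int p) ((i + s) mod 3) ((j + s) mod 3) = M w i j"
proof (rule antisym)
  show "M w i j \<le> M ((t * w) mod int p) ((i + s) mod 3) ((j + s) mod 3)" using M_scale_le[OF t i j] .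
  define e where "e = (3 - s) mod 3"
  have s3: "s < 3" using S_lt3[OF t] .
  have t': "xinv t \<in> S e" using xinv_S[OF t] unfolding e_def .
  have A: "M ((t * w) mod int p) ((i + s) mod 3) ((j + s) mod 3)
      \<le> M ((xinv t * ((t * w) mod int p)) mod int p) (((i + s) mod 3 + e) mod 3) (((j + s) mod 3 + e) mod 3)"
    by (rule M_scale_le[OF t']) simp_all
  have B: "(xinv t * ((t * w) mod int p)) mod int p = w"
  proof -
    have "(xinv t * ((t * w) mod int p)) mod int p = (xinv t * (t * w)) mod int p"
      by (simp add: mod_mult_right_eq)
    also have "\<dots> = ((t * xinv t) * w) mod int p" by (simp add: ac_simps)
    also have "\<dots> = (((t * xinv t) mod int p) * w) mod int p" by (simp add: mod_mult_left_eq)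
    also have "\<dots> = w" using xinv_mult[OF t] w by simp
    finally show ?thesis .
  qed
  have C: "((i + s) mod 3 + e) mod 3 = i" "((j + s) mod 3 + e) mod 3 = j"
    using i j s3 unfolding e_def by (auto simp: less3)
  from A show "M ((t * w) mod int p) ((i + s) mod 3) ((j + s) mod 3) \<le> M w i j" unfolding B C .
qed

lemma M_class:
  assumes w: "w \<in> S k" and i: "i < 3" and j: "j < 3"
  shows "M w i j = g ((i + 3 - k) mod 3) ((j + 3 - k) mod 3)"
proof -
  have k: "k < 3" using S_lt3[OF w] .
  have "M ((w * 1) mod int p) (((i + 3 - k) mod 3 + k) mod 3) (((j + 3 - k) mod 3 + k) mod 3)
      = M 1 ((i + 3 - k) mod 3) ((j + 3 - k) mod 3)"
    by (rule M_scale[OF w]) (use p_gt1 in simp_all)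
  moreover have "(w * 1) mod int p = w" using S_range[OF w] by simp
  moreover have "((i + 3 - k) mod 3 + k) mod 3 = i" "((j + 3 - k) mod 3 + k) mod 3 = j"
    using i j k by (auto simp: less3)
  ultimately show ?thesis unfolding g_def by simp
qed

lemma M_zero:
  assumes i: "i < 3"
  shows "M 0 i j = (if i = j then f else 0)"
proof -
  have "{x \<in> S i. (0 - x) mod int p \<in> S j} = (if i = j then S i else {})"
  proof (cases "i = j")
    case True then show ?thesis using S_neg by auto
  next
    case False
    have "{x \<in> S i. (0 - x) mod int p \<in> S j} = {}"
    proof safe
      fix x assume x: "x \<in> S i" "(0 - x) mod int p \<in> S j"
      have "(- x) mod int p \<in> S i" using S_neg[OF x(1)] .
      moreover have "(- x) mod int p \<in> S j" using x(2) by simp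
      ultimately have "i = j" by (rule S_disj)
      then show "x \<in> {}" using False by simp
    qed
    then show ?thesis using False by simp
  qed
  then show ?thesis unfolding M_def using card_S[OF i] by auto
qed

lemma M_comm_le:
  assumes w: "0 \<le> w" "w < int p"
  shows "M w i j \<le> M w j i"
proof -
  let ?h = "\<lambda>x. (w - x) mod int p"
  let ?A = "{x \<in> S i. (w - x) mod int p \<in> S j}"
  let ?B = "{x \<in> S j. (w - x) mod int p \<in> S i}"
  have "inj_on ?h ?A"
  proof
    fix x y assume x: "x \<in> ?A" and y: "y \<in> ?A" and eq: "?h x = ?h y"
    then have "int p dvd y - x" by (simp add: mod_eq_dvd_iff algebra_simps)
    moreover have "0 < x" "x < int p" "0 < y" "y < int p" using x y S_range by auto
    ultimately show "x = y" using eq_mod[of y x] by simp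
  qed
  moreover have "?h ` ?A \<subseteq> ?B"
  proof
    fix z assume "z \<in> ?h ` ?A"
    then obtain x where x: "x \<in> S i" "(w - x) mod int p \<in> S j" and z: "z = ?h x" by auto
    have "(w - z) mod int p = x mod int p" unfolding z by (simp add: mod_diff_right_eq)
    also have "\<dots> = x" using S_range[OF x(1)] by simp
    finally show "z \<in> ?B" using x z by simp
  qed
  moreover have "finite ?B" using fin_S by simp
  ultimately show ?thesis unfolding M_def by (rule card_inj_on_le)
qed

lemma M_comm: "0 \<le> w \<Longrightarrow> w < int p \<Longrightarrow> M w i j = M w j i"
  using M_comm_le by (simp add: antisym)

lemma g_inv_le:
  assumes i: "i < 3" and j: "j < 3"
  shows "g i j \<le> g ((3 - i) mod 3) ((j + 3 - i) mod 3)"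
proof -
  let ?A = "{x \<in> S i. (1 - x) mod int p \<in> S j}"
  let ?B = "{x \<in> S ((3 - i) mod 3). (1 - x) mod int p \<in> S ((j + 3 - i) mod 3)}"
  have "inj_on xinv ?A"
  proof
    fix x y assume x: "x \<in> ?A" and y: "y \<in> ?A" and eq: "xinv x = xinv y"
    have "(x * xinv x) mod int p = (y * xinv x) mod int p"
      using xinv_mult[of x i] xinv_mult[of y i] x y eq by simp
    then have "int p dvd (x - y) * xinv x" by (simp add: mod_eq_dvd_iff algebra_simps)
    then have "int p dvd x - y" using dvd_cancel_S xinv_S x by blast
    moreover have "0 < x" "x < int p" "0 < y" "y < int p" using x y S_range by auto
    ultimately show "x = y" using eq_mod by simp
  qed
  moreover have "xinv ` ?A \<subseteq> ?B"
  proof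
    fix z assume "z \<in> xinv ` ?A"
    then obtain x where x: "x \<in> S i" "(1 - x) mod int p \<in> S j" and z: "z = xinv x" by auto
    have zS: "z \<in> S ((3 - i) mod 3)" using xinv_S[OF x(1)] z by simp
    have nx: "(- ((1 - x) mod int p)) mod int p \<in> S j" using S_neg[OF x(2)] .
    have "(((- ((1 - x) mod int p)) mod int p) * z) mod int p \<in> S ((j + (3 - i) mod 3) mod 3)"
      using S_mult[OF nx zS] .
    moreover have "(j + (3 - i) mod 3) mod 3 = (j + 3 - i) mod 3" using i j by (auto simp: less3)
    moreover have "(((- ((1 - x) mod int p)) mod int p) * z) mod int p = (1 - z) mod int p"
    proof -
      have "(((- ((1 - x) mod int p)) mod int p) * z) mod int p = ((x - 1) * z) mod int p"
        by (metis minus_diff_eq mod_minus_eq mod_mult_left_eq)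
      also have "\<dots> = ((x * z) - z) mod int p" by (simp add: algebra_simps)
      also have "\<dots> = ((x * z) mod int p - z) mod int p" by (simp add: mod_diff_left_eq)
      also have "\<dots> = (1 - z) mod int p" using xinv_mult[OF x(1)] z by simp
      finally show ?thesis .
    qed
    ultimately show "z \<in> ?B" using zS by simp
  qed
  moreover have "finite ?B" using fin_S by simp
  ultimately show ?thesis unfolding g_def M_def by (rule card_inj_on_le)
qed

lemma g_inv:
  assumes i: "i < 3" and j: "j < 3"
  shows "g i j = g ((3 - i) mod 3) ((j + 3 - i) mod 3)"
proof (rule antisym)
  show "g i j \<le> g ((3 - i) mod 3) ((j + 3 - i) mod 3)" using g_inv_le[OF i j] .
  have A: "g ((3 - i) mod 3) ((j + 3 - i) mod 3)
     \<le> g ((3 - (3 - i) mod 3) mod 3) (((j + 3 - i) mod 3 + 3 - (3 - i) mod 3) mod 3)"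
    by (rule g_inv_le) simp_all
  have C: "(3 - (3 - i) mod 3) mod 3 = i" "((j + 3 - i) mod 3 + 3 - (3 - i) mod 3) mod 3 = j"
    using i j by (auto simp: less3)
  from A show "g ((3 - i) mod 3) ((j + 3 - i) mod 3) \<le> g i j" unfolding C .
qed

lemma sum_if_const: "finite A \<Longrightarrow> (\<Sum>v\<in>A. if P v then G else (0::nat)) = G * card {v\<in>A. P v}"
  by (simp add: sum.If_cases Int_def mult.commute)

lemma M_lin:
  assumes w: "0 \<le> w" "w < int p" and i: "i < 3"
  shows "M w i 0 + M w i 1 + M w i 2 + (if w \<in> S i then 1 else 0) = f"
proof -
  define A where "A j = {x \<in> S i. (w - x) mod int p \<in> S j}" for j
  have finA: "finite (A j)" for j unfolding A_def using fin_S by simp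
  have disj: "A j \<inter> A k = {}" if "j \<noteq> k" for j k
    using S_disj that unfolding A_def by blast
  have U: "A 0 \<union> A 1 \<union> A 2 = S i - {w}"
  proof
    show "A 0 \<union> A 1 \<union> A 2 \<subseteq> S i - {w}"
    proof
      fix x assume x: "x \<in> A 0 \<union> A 1 \<union> A 2"
      then have xS: "x \<in> S i" unfolding A_def by auto
      have "x \<noteq> w"
      proof
        assume "x = w"
        then have "(w - x) mod int p = 0" by simp
        then show False using x S_range unfolding A_def by fastforce
      qed
      then show "x \<in> S i - {w}" using xS by simp
    qed
    show "S i - {w} \<subseteq> A 0 \<union> A 1 \<union> A 2"
    proof
      fix x assume x: "x \<in> S i - {w}"
      have xr: "0 < x" "x < int p" using x S_range by auto
      have "(w - x) mod int p \<noteq> 0"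
      proof
        assume "(w - x) mod int p = 0"
        then have "int p dvd w - x" by auto
        then have "w = x" using eq_mod w xr by simp
        then show False using x by simp
      qed
      moreover have "0 \<le> (w - x) mod int p" "(w - x) mod int p < int p" using p_gt1 by simp_all
      ultimately have "\<exists>r<3. (w - x) mod int p \<in> S r" by (intro S_cover) auto
      then obtain r where "r < 3" "(w - x) mod int p \<in> S r" by blast
      then show "x \<in> A 0 \<union> A 1 \<union> A 2" using x unfolding A_def by (auto simp: less3)
    qed
  qed
  have "card (A 0 \<union> A 1 \<union> A 2) = card (A 0) + card (A 1) + card (A 2)"
  proof -
    have "card (A 0 \<union> A 1) = card (A 0) + card (A 1)" using finA disj[of 0 1] by (simp add: card_Un_disjoint)
    moreover have "(A 0 \<union> A 1) \<inter> A 2 = {}" using disj[of 0 2] disj[of 1 2] by auto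
    ultimately show ?thesis using finA by (simp add: card_Un_disjoint)
  qed
  moreover have "card (S i - {w}) = f - (if w \<in> S i then 1 else 0)"
    using card_S[OF i] fin_S by (simp add: card_Diff_singleton_if)
  moreover have "w \<in> S i \<Longrightarrow> f \<ge> 1" using f_pos by simp
  ultimately show ?thesis unfolding M_def A_def[symmetric] using U by (auto split: if_splits)
qed

definition T :: "int \<Rightarrow> nat \<Rightarrow> nat \<Rightarrow> nat \<Rightarrow> (int \<times> int \<times> int) set" where
  "T w a b c = {(x, y, z). x \<in> S a \<and> y \<in> S b \<and> z \<in> S c \<and> (x + y + z) mod int p = w}"

lemma fin_T: "finite (T w a b c)"
proof -
  have "T w a b c \<subseteq> S a \<times> S b \<times> S c" unfolding T_def by auto
  then show ?thesis using fin_S by (meson finite_SigmaI finite_subset)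
qed

lemma T_rot: "card (T w a b c) = card (T w b c a)"
proof -
  let ?h = "\<lambda>(x::int, y::int, z::int). (y, z, x)"
  have "inj_on ?h (T w a b c)" by (auto simp: inj_on_def)
  moreover have "?h ` T w a b c = T w b c a"
  proof
    show "?h ` T w a b c \<subseteq> T w b c a" unfolding T_def by (auto simp: ac_simps)
    show "T w b c a \<subseteq> ?h ` T w a b c"
    proof
      fix t assume "t \<in> T w b c a"
      then obtain y z x where t: "t = (y, z, x)" "y \<in> S b" "z \<in> S c" "x \<in> S a" "(y + z + x) mod int p = w"
        unfolding T_def by auto
      then have "(x, y, z) \<in> T w a b c" unfolding T_def by (auto simp: ac_simps)
      then show "t \<in> ?h ` T w a b c" using t by force
    qed
  qed
  ultimately show ?thesis by (metis card_image)
qed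

lemma modp_eq: "(a::int) mod int p = b mod int p \<longleftrightarrow> int p dvd a - b"
  by (rule mod_eq_dvd_iff)

lemma T_fiber:
  assumes w: "0 \<le> w" "w < int p" and v: "0 \<le> v" "v < int p"
  shows "card {t \<in> T w a b c. (fst t + fst (snd t)) mod int p = v}
       = (if (w - v) mod int p \<in> S c then M v a b else 0)"
proof (cases "(w - v) mod int p \<in> S c")
  case True
  let ?h = "\<lambda>x. (x, (v - x) mod int p, (w - v) mod int p)"
  have "{t \<in> T w a b c. (fst t + fst (snd t)) mod int p = v} = ?h ` {x \<in> S a. (v - x) mod int p \<in> S b}"
  proof
    show "{t \<in> T w a b c. (fst t + fst (snd t)) mod int p = v} \<subseteq> ?h ` {x \<in> S a. (v - x) mod int p \<in> S b}"
    proof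
      fix t assume "t \<in> {t \<in> T w a b c. (fst t + fst (snd t)) mod int p = v}"
      then obtain x y z where t: "t = (x, y, z)" "x \<in> S a" "y \<in> S b" "z \<in> S c"
        "(x + y + z) mod int p = w" "(x + y) mod int p = v" unfolding T_def by auto
      have yr: "0 < y" "y < int p" "0 < z" "z < int p" using t S_range by auto
      have "y mod int p = (v - x) mod int p"
        unfolding modp_eq using t(6) v by (metis modp_eq mod_pos_pos_trivial diff_diff_eq2 add.commute)
      then have y: "y = (v - x) mod int p" using yr by simp
      have "z mod int p = (w - v) mod int p"
      proof -
        have "int p dvd (x + y + z) - w" using t(5) w by (metis modp_eq mod_pos_pos_trivial)
        moreover have "int p dvd (x + y) - v" using t(6) v by (metis modp_eq mod_pos_pos_trivial)
        ultimately have "int p dvd ((x + y + z) - w) - ((x + y) - v)" by (rule dvd_diff)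
        then show ?thesis unfolding modp_eq by (simp add: algebra_simps)
      qed
      then have z: "z = (w - v) mod int p" using yr by simp
      show "t \<in> ?h ` {x \<in> S a. (v - x) mod int p \<in> S b}" using t y z by auto
    qed
    show "?h ` {x \<in> S a. (v - x) mod int p \<in> S b} \<subseteq> {t \<in> T w a b c. (fst t + fst (snd t)) mod int p = v}"
    proof
      fix t assume "t \<in> ?h ` {x \<in> S a. (v - x) mod int p \<in> S b}"
      then obtain x where x: "x \<in> S a" "(v - x) mod int p \<in> S b" and t: "t = ?h x" by auto
      have e1: "(x + (v - x) mod int p) mod int p = v"
      proof -
        have "(x + (v - x) mod int p) mod int p = (x + (v - x)) mod int p" by (simp add: mod_add_right_eq)
        then show ?thesis using v by simp
      qed
      have e2: "(x + (v - x) mod int p + (w - v) mod int p) mod int p = w"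
      proof -
        have "(x + (v - x) mod int p + (w - v) mod int p) mod int p = ((x + (v - x) mod int p) mod int p + (w - v) mod int p) mod int p"
          by (simp add: mod_add_left_eq)
        also have "\<dots> = (v + (w - v)) mod int p" unfolding e1 by (simp add: mod_add_right_eq)
        finally show ?thesis using w by simp
      qed
      show "t \<in> {t \<in> T w a b c. (fst t + fst (snd t)) mod int p = v}"
        using x True e1 e2 unfolding t T_def by simp
    qed
  qed
  moreover have "inj_on ?h {x \<in> S a. (v - x) mod int p \<in> S b}" by (auto simp: inj_on_def)
  ultimately show ?thesis using True unfolding M_def by (simp add: card_image)
next
  case False
  have "{t \<in> T w a b c. (fst t + fst (snd t)) mod int p = v} = {}"
  proof (rule equals0I)
    fix t assume "t \<in> {t \<in> T w a b c. (fst t + fst (snd t)) mod int p = v}"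
    then obtain x y z where xyz: "z \<in> S c" "(x + y + z) mod int p = w" "(x + y) mod int p = v"
      unfolding T_def by auto
    have zr: "0 < z" "z < int p" using xyz S_range by auto
    have "z mod int p = (w - v) mod int p"
    proof -
      have "int p dvd (x + y + z) - w" using xyz w by (metis modp_eq mod_pos_pos_trivial)
      moreover have "int p dvd (x + y) - v" using xyz v by (metis modp_eq mod_pos_pos_trivial)
      ultimately have "int p dvd ((x + y + z) - w) - ((x + y) - v)" by (rule dvd_diff)
      then show ?thesis unfolding modp_eq by (simp add: algebra_simps)
    qed
    then have "z = (w - v) mod int p" using zr by simp
    then show False using False xyz by simp
  qed
  note E = this
  show ?thesis unfolding E using False by simp
qed

lemma card_T:
  assumes w: "0 \<le> w" "w < int p"
  shows "card (T w a b c) = (\<Sum>v\<in>{0..<int p}. if (w - v) mod int p \<in> S c then M v a b else 0)"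
proof -
  define F where "F v = {t \<in> T w a b c. (fst t + fst (snd t)) mod int p = v}" for v
  have "T w a b c = (\<Union>v\<in>{0..<int p}. F v)"
    unfolding F_def using p_gt1 by auto
  moreover have "card (\<Union>v\<in>{0..<int p}. F v) = (\<Sum>v\<in>{0..<int p}. card (F v))"
    by (rule card_UN_disjoint) (auto simp: F_def intro: finite_subset[OF _ fin_T])
  moreover have "card (F v) = (if (w - v) mod int p \<in> S c then M v a b else 0)" if "v \<in> {0..<int p}" for v
    unfolding F_def using T_fiber[OF w, of v] that by simp
  ultimately show ?thesis by simp
qed

lemma assoc:
  assumes w: "0 \<le> w" "w < int p"
  shows "(\<Sum>v\<in>{0..<int p}. if (w - v) mod int p \<in> S c then M v a b else 0)
       = (\<Sum>v\<in>{0..<int p}. if (w - v) mod int p \<in> S a then M v b c else 0)"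
  using card_T[OF w, of a b c] card_T[OF w, of b c a] T_rot[of w a b c] by simp

lemma sum_split:
  "(\<Sum>v\<in>{0..<int p}. F v) = F 0 + (\<Sum>v\<in>S 0. F v) + (\<Sum>v\<in>S 1. F v) + (\<Sum>v\<in>S 2. (F v :: nat))"
proof -
  have U: "{0..<int p} = {0} \<union> S 0 \<union> S 1 \<union> S 2"
  proof
    show "{0..<int p} \<subseteq> {0} \<union> S 0 \<union> S 1 \<union> S 2"
    proof
      fix v assume v: "v \<in> {0..<int p}"
      show "v \<in> {0} \<union> S 0 \<union> S 1 \<union> S 2"
      proof (cases "v = 0")
        case False
        then obtain r where "r < 3" "v \<in> S r" using S_cover[of v] v by auto
        then show ?thesis by (auto simp: less3)
      qed simp
    qed
    show "{0} \<union> S 0 \<union> S 1 \<union> S 2 \<subseteq> {0..<int p}" using S_range p_gt1 by force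
  qed
  have d1: "{0} \<inter> S r = {}" for r using S_range by force
  have d2: "S r \<inter> S s = {}" if "r \<noteq> s" for r s using S_disj that by blast
  have "(\<Sum>v\<in>{0} \<union> S 0 \<union> S 1 \<union> S 2. F v) = (\<Sum>v\<in>{0} \<union> S 0 \<union> S 1. F v) + (\<Sum>v\<in>S 2. F v)"
    by (rule sum.union_disjoint) (use fin_S d1[of 2] d2[of 0 2] d2[of 1 2] in auto)
  also have "(\<Sum>v\<in>{0} \<union> S 0 \<union> S 1. F v) = (\<Sum>v\<in>{0} \<union> S 0. F v) + (\<Sum>v\<in>S 1. F v)"
    by (rule sum.union_disjoint) (use fin_S d1[of 1] d2[of 0 1] in auto)
  also have "(\<Sum>v\<in>{0} \<union> S 0. F v) = F 0 + (\<Sum>v\<in>S 0. F v)"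
    by (subst sum.union_disjoint) (use fin_S d1[of 0] in auto)
  finally show ?thesis unfolding U by simp
qed

lemma sum_class:
  assumes w: "0 \<le> w" "w < int p" and k: "k < 3" and a: "a < 3" and b: "b < 3"
  shows "(\<Sum>v\<in>S k. if (w - v) mod int p \<in> S c then M v a b else 0)
       = g ((a + 3 - k) mod 3) ((b + 3 - k) mod 3) * M w k c"
proof -
  have "(\<Sum>v\<in>S k. if (w - v) mod int p \<in> S c then M v a b else 0)
      = (\<Sum>v\<in>S k. if (w - v) mod int p \<in> S c then g ((a + 3 - k) mod 3) ((b + 3 - k) mod 3) else 0)"
    by (rule sum.cong) (auto simp: M_class a b)
  also have "\<dots> = g ((a + 3 - k) mod 3) ((b + 3 - k) mod 3) * card {v \<in> S k. (w - v) mod int p \<in> S c}"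
    by (rule sum_if_const[OF fin_S])
  finally show ?thesis unfolding M_def by simp
qed

lemma g_comm: "g i j = g j i"
  unfolding g_def using M_comm[of 1 i j] p_gt1 by simp

lemma key_rel:
  "g 0 0 * g 1 2 + g 2 2 * g 2 2 + g 1 1 * g 0 2 = g 0 1 * g 1 1 + g 2 0 * g 2 1 + g 1 2 * g 0 1"
proof -
  define w where "w = int (l^2 mod p)"
  have wS: "w \<in> S 2" using pow_in_S[of 2] unfolding w_def by simp
  have wr: "0 \<le> w" "w < int p" using S_range[OF wS] by auto
  have wm: "w mod int p = w" using wr by simp
  have n0: "w \<notin> S 0" and n1: "w \<notin> S (Suc 0)" using S_disj wS by force+
  have A: "(\<Sum>v\<in>{0..<int p}. if (w - v) mod int p \<in> S 1 then M v 0 0 else 0)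
         = (\<Sum>v\<in>{0..<int p}. if (w - v) mod int p \<in> S 0 then M v 0 1 else 0)"
    using assoc[OF wr, where a=0 and b=0 and c=1] by simp
  then show ?thesis
    unfolding sum_split by (simp add: wm n0 n1 sum_class[OF wr] M_class[OF wS])
qed

lemma key:
  "4 * int p = (9 * int (g 0 0) - int p + 8)^2 + 27 * (int (g 2 2) - int (g 1 1))^2"
  "g 0 0 + g 2 2 + g 1 1 + 1 = f"
proof -
  have n1: "1 \<notin> S 1" using S_disj one_S0 by force
  have lin0: "g 0 0 + g 0 1 + g 0 2 + 1 = f" using M_lin[of 1 0] one_S0 p_gt1 unfolding g_def by simp
  have lin1: "g 1 0 + g 1 1 + g 1 2 = f" using M_lin[of 1 1] n1 p_gt1 unfolding g_def by simp
  have c1: "g 1 0 = g 0 1" "g 2 0 = g 0 2" "g 2 1 = g 1 2" using g_comm by auto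
  have i1: "g 1 0 = g 2 2" using g_inv[of 1 0] by simp
  have i2: "g 1 1 = g 2 0" using g_inv[of 1 1] by simp
  have R: "g 0 0 * g 1 2 + g 0 1 * g 0 1 + g 0 2 * g 0 2 = g 0 1 * g 0 2 + g 0 2 * g 1 2 + g 1 2 * g 0 1"
    using key_rel c1 i1 i2 by simp
  define A where "A = int (g 0 0)"
  define B where "B = int (g 0 1)"
  define C where "C = int (g 0 2)"
  define D where "D = int (g 1 2)"
  have RI: "A * D + B * B + C * C = B * C + C * D + D * B"
    unfolding A_def B_def C_def D_def using arg_cong[OF R, of int] by simp
  have L0: "A + B + C + 1 = int f" unfolding A_def B_def C_def using lin0 by simp
  have L1: "B + C + D = int f" unfolding B_def C_def D_def using lin1 c1 i2 by simp
  have P: "int p = 3 * int f + 1" using p_eq by simp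
  have G22: "int (g 2 2) = B" unfolding B_def using i1 c1 by simp
  have G11: "int (g 1 1) = C" unfolding C_def using i2 c1 by simp
  show "4 * int p = (9 * int (g 0 0) - int p + 8)^2 + 27 * (int (g 2 2) - int (g 1 1))^2"
  proof -
    have DA: "D = A + 1" using L0 L1 by simp
    have PA: "int p = 3 * A + 3 * B + 3 * C + 4" using L0 P by simp
    have RI': "A * (A + 1) + B * B + C * C - (B * C + C * (A + 1) + (A + 1) * B) = 0"
      using RI unfolding DA by simp
    have id: "(9 * A - (3 * A + 3 * B + 3 * C + 4) + 8)^2 + 27 * (B - C)^2 - 4 * (3 * A + 3 * B + 3 * C + 4)
        = 36 * (A * (A + 1) + B * B + C * C - (B * C + C * (A + 1) + (A + 1) * B))"
      unfolding power2_eq_square by (simp add: algebra_simps)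
    show ?thesis unfolding G22 G11 A_def[symmetric] PA using id RI' by simp
  qed
  show "g 0 0 + g 2 2 + g 1 1 + 1 = f" using lin0 i1 i2 c1 by simp
qed

end

lemma card3: "(B::nat) \<noteq> C \<Longrightarrow> card {X, B, C} = (if X = B \<or> X = C then 2 else 3)"
  by (auto simp: card_insert_if)

theorem lemma7p3:
  fixes G (structure) and a :: 'g and p l i :: nat and z1 z2 z3 :: 'g
  assumes "prime p" and "p mod 3 = 1"
    and "group G" and "a \<in> carrier G"
    and "carrier G = {a [^] (n::nat) | n. True}" and "card (carrier G) = p"
    and "residue_primroot p l"
    and "i \<in> {1, 2}"
    and "z1 \<in> cyc_class G a l p 1" and "z2 \<in> cyc_class G a l p 2" and "z3 \<in> cyc_class G a l p 3"
  shows "card {cyc_count G a l p 1 1 z1 + 2 * (i - 1), cyc_count G a l p 1 1 z2, cyc_count G a l p 1 1 z3} \<in> {2, 3}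
       \<and> (card {cyc_count G a l p 1 1 z1 + 2 * (i - 1), cyc_count G a l p 1 1 z2, cyc_count G a l p 1 1 z3} = 2
            \<longleftrightarrow> (\<exists>t::int. int p = t ^ 2 + 3 * int i ^ 2))"
proof -
  note pr = assms(1) and p3 = assms(2) and grp = assms(3) and aG = assms(4) and carr = assms(5)
    and cardG = assms(6) and proot = assms(7) and i = assms(8)
  interpret cyc p l using pr p3 proot by unfold_locales
  interpret group G by (rule grp)
  have finG: "finite (carrier G)" using cardG p_gt1 card_ge_0_finite by force
  have ap: "a [^] p = \<one>" using pow_order_eq_1[OF aG] cardG unfolding order_def by simp
  have powmod: "a [^] n = a [^] (n mod p)" for n :: nat
  proof -
    have "a [^] n = a [^] (p * (n div p) + n mod p)" by simp
    also have "\<dots> = a [^] (p * (n div p)) \<otimes> a [^] (n mod p)"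
      using nat_pow_mult[OF aG] by simp
    also have "a [^] (p * (n div p)) = \<one>"
      using nat_pow_pow[OF aG, of p "n div p"] ap by simp
    also have "\<one> \<otimes> a [^] (n mod p) = a [^] (n mod p)" using aG by simp
    finally show ?thesis .
  qed
  have img: "(\<lambda>n. a [^] n) ` {..<p} = carrier G"
  proof
    show "(\<lambda>n. a [^] n) ` {..<p} \<subseteq> carrier G" using aG by auto
    show "carrier G \<subseteq> (\<lambda>n. a [^] n) ` {..<p}"
    proof
      fix x assume "x \<in> carrier G"
      then obtain n :: nat where "x = a [^] n" using carr by auto
      then have "x = a [^] (n mod p)" using powmod by simp
      moreover have "n mod p < p" using p_gt1 by simp
      ultimately show "x \<in> (\<lambda>n. a [^] n) ` {..<p}" by blast
    qed
  qed
  have injp: "inj_on (\<lambda>n. a [^] n) {..<p}"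
    using img cardG by (simp add: inj_on_iff_eq_card)
  define \<psi> where "\<psi> x = a [^] nat x" for x :: int
  have \<psi>_inj: "x = y" if "0 \<le> x" "x < int p" "0 \<le> y" "y < int p" "\<psi> x = \<psi> y" for x y
  proof -
    have "nat x \<in> {..<p}" "nat y \<in> {..<p}" using that by auto
    then have "nat x = nat y" using injp that(5) unfolding \<psi>_def inj_on_def by blast
    then show ?thesis using that by simp
  qed
  have \<psi>_mult: "\<psi> x \<otimes> \<psi> y = \<psi> ((x + y) mod int p)" if "0 \<le> x" "0 \<le> y" for x y
  proof -
    have "\<psi> x \<otimes> \<psi> y = a [^] (nat x + nat y)" unfolding \<psi>_def using aG by (simp add: nat_pow_mult)
    also have "\<dots> = a [^] ((nat x + nat y) mod p)" by (rule powmod)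
    also have "(nat x + nat y) mod p = nat ((x + y) mod int p)"
      using that by (simp add: nat_mod_distrib nat_add_distrib)
    finally show ?thesis unfolding \<psi>_def .
  qed
  have cls: "cyc_class G a l p (Suc r) = \<psi> ` S r" if r: "r < 3" for r
  proof -
    have "\<psi> ` S r = (\<lambda>j. a [^] (l ^ (3 * j + r))) ` {..<f}"
      unfolding S_alt[OF r] image_image \<psi>_def using powmod by (simp add: nat_int)
    then show ?thesis unfolding cyc_class_def f_def by auto
  qed
  have cnt: "cyc_count G a l p 1 1 (\<psi> w) = M w 0 0" if w: "0 \<le> w" "w < int p" for w
  proof -
    let ?h = "\<lambda>x. (\<psi> x, \<psi> ((w - x) mod int p))"
    let ?A = "{x \<in> S 0. (w - x) mod int p \<in> S 0}"
    have c1: "cyc_class G a l p 1 = \<psi> ` S 0" using cls[of 0] by simp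
    have "{(x, y). x \<in> cyc_class G a l p 1 \<and> y \<in> cyc_class G a l p 1 \<and> x \<otimes> y = \<psi> w} = ?h ` ?A"
    proof
      show "{(x, y). x \<in> cyc_class G a l p 1 \<and> y \<in> cyc_class G a l p 1 \<and> x \<otimes> y = \<psi> w} \<subseteq> ?h ` ?A"
      proof
        fix q assume "q \<in> {(x, y). x \<in> cyc_class G a l p 1 \<and> y \<in> cyc_class G a l p 1 \<and> x \<otimes> y = \<psi> w}"
        then obtain x y where q: "q = (\<psi> x, \<psi> y)" "x \<in> S 0" "y \<in> S 0" "\<psi> x \<otimes> \<psi> y = \<psi> w"
          unfolding c1 by auto
        have xr: "0 < x" "x < int p" "0 < y" "y < int p" using q S_range by auto
        have "\<psi> ((x + y) mod int p) = \<psi> w" using q(4) \<psi>_mult xr by simp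
        then have "(x + y) mod int p = w" using \<psi>_inj w p_gt1 by simp
        then have "y mod int p = (w - x) mod int p" by (metis add_diff_cancel_left' mod_diff_left_eq)
        then have y: "y = (w - x) mod int p" using xr by simp
        show "q \<in> ?h ` ?A" using q y by auto
      qed
      show "?h ` ?A \<subseteq> {(x, y). x \<in> cyc_class G a l p 1 \<and> y \<in> cyc_class G a l p 1 \<and> x \<otimes> y = \<psi> w}"
      proof
        fix q assume "q \<in> ?h ` ?A"
        then obtain x where x: "x \<in> S 0" "(w - x) mod int p \<in> S 0" and q: "q = ?h x" by auto
        have xr: "0 \<le> x" using x S_range by force
        have "\<psi> x \<otimes> \<psi> ((w - x) mod int p) = \<psi> ((x + (w - x) mod int p) mod int p)"
          using \<psi>_mult xr p_gt1 by simp
        also have "(x + (w - x) mod int p) mod int p = w"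
          using w by (simp add: mod_add_right_eq)
        finally have prod: "\<psi> x \<otimes> \<psi> ((w - x) mod int p) = \<psi> w" .
        have m1: "\<psi> x \<in> \<psi> ` S 0" using x(1) by (rule imageI)
        have m2: "\<psi> ((w - x) mod int p) \<in> \<psi> ` S 0" using x(2) by (rule imageI)
        show "q \<in> {(x, y). x \<in> cyc_class G a l p 1 \<and> y \<in> cyc_class G a l p 1 \<and> x \<otimes> y = \<psi> w}"
          unfolding c1 q using m1 m2 prod by simp
      qed
    qed
    moreover have "inj_on ?h ?A"
    proof
      fix x y assume xy: "x \<in> ?A" "y \<in> ?A" "?h x = ?h y"
      have "\<psi> x = \<psi> y" using xy(3) by simp
      moreover have "0 < x" "x < int p" "0 < y" "y < int p" using xy(1,2) S_range by auto
      ultimately show "x = y" using \<psi>_inj[of x y] by simp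
    qed
    ultimately show ?thesis unfolding cyc_count_def M_def by (simp add: card_image)
  qed
  have zc: "\<exists>w \<in> S r. z = \<psi> w" if "z \<in> cyc_class G a l p (Suc r)" "r < 3" for z r
    using that cls by auto
  obtain w1 where w1: "w1 \<in> S 0" "z1 = \<psi> w1" using zc[of z1 0] assms(9) by auto
  obtain w2 where w2: "w2 \<in> S 1" "z2 = \<psi> w2" using zc[of z2 1] assms(10) by (auto simp: numeral_2_eq_2)
  obtain w3 where w3: "w3 \<in> S 2" "z3 = \<psi> w3" using zc[of z3 2] assms(11) by (auto simp: numeral_3_eq_3)
  have e1: "cyc_count G a l p 1 1 z1 = g 0 0"
    using cnt[of w1] w1 S_range[OF w1(1)] M_class[OF w1(1), of 0 0] by simp
  have e2: "cyc_count G a l p 1 1 z2 = g 2 2"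
    using cnt[of w2] w2 S_range[OF w2(1)] M_class[OF w2(1), of 0 0] by simp
  have e3: "cyc_count G a l p 1 1 z3 = g 1 1"
    using cnt[of w3] w3 S_range[OF w3(1)] M_class[OF w3(1), of 0 0] by simp
  define A where "A = g 0 0"
  define B where "B = g 2 2"
  define C where "C = g 1 1"
  define u where "u = 9 * int A - int p + 8"
  define v where "v = 3 * (int B - int C)"
  have v2: "v^2 = 9 * (int B - int C)^2" unfolding v_def by (simp add: power2_eq_square algebra_simps)
  have K1: "4 * int p = u^2 + 3 * v^2"
    using key(1) unfolding v2 u_def A_def B_def C_def by simp
  have K2: "A + B + C + 1 = f" using key(2) unfolding A_def B_def C_def by simp
  have PF: "int p = 3 * int f + 1" using p_eq by simp
  have um: "u mod 3 = 1"
  proof -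
    have eq: "u = 1 + 3 * (3 * int A - int f + 2)" unfolding u_def using PF by simp
    show ?thesis unfolding eq by (subst mod_mult_self2) simp
  qed
  have vm: "v mod 3 = 0" unfolding v_def by simp
  have uv1: "u - v = 6 * (int A - int B) + 4" unfolding u_def v_def using K2 PF by simp
  have uv2: "u + v = 6 * (int A - int C) + 4" unfolding u_def v_def using K2 PF by simp
  have BC: "B \<noteq> C"
  proof
    assume "B = C"
    then have "4 * int p = u^2" using K1 unfolding v_def by simp
    then have "int p dvd u * u" by (simp add: power2_eq_square) (metis dvd_triv_right)
    moreover have "prime (int p)" using pr by simp
    ultimately have "int p dvd u" using prime_dvd_mult_iff by blast
    then obtain c where "u = int p * c" by (elim dvdE)
    then have "4 * int p = int p * (int p * c^2)" using \<open>4 * int p = u^2\<close> by (simp add: power2_eq_square algebra_simps)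
    then have "4 = int p * c^2" using p_gt1 by simp
    then have "int p dvd 4" by (metis dvd_triv_left)
    then have "int p \<le> 4" by (rule zdvd_imp_le) simp
    then have p4: "p = 4" using p_eq f_pos by simp
    have "prime ((2::nat) * 2)" using pr p4 by simp
    from prime_product[OF this] show False by simp
  qed
  have i12: "int i = 1 \<or> int i = 2" using i by auto
  have eqB: "A + 2 * (i - 1) = B \<longleftrightarrow> u - v = 16 - 12 * int i"
    using uv1 i by auto
  have eqC: "A + 2 * (i - 1) = C \<longleftrightarrow> u + v = 16 - 12 * int i"
    using uv2 i by auto
  have card_eq: "card {A + 2 * (i - 1), B, C} = (if A + 2 * (i - 1) = B \<or> A + 2 * (i - 1) = C then 2 else 3)"
    using card3[OF BC] .
  have fwd: "\<exists>t::int. int p = t ^ 2 + 3 * int i ^ 2" if "u - v = 16 - 12 * int i \<or> u + v = 16 - 12 * int i"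
  proof -
    from that i12 consider "u = v + 4" "int i = 1" | "u = v - 8" "int i = 2" | "u = 4 - v" "int i = 1" | "u = -v - 8" "int i = 2"
      by linarith
    then show ?thesis
    proof cases
      case 1
      have "4 * int p = (v + 4)^2 + 3 * v^2" using K1 1(1) by simp
      also have "\<dots> = 4 * ((v + 1)^2 + 3 * int i ^ 2)" using 1(2) by (simp add: power2_eq_square algebra_simps)
      finally have "4 * int p = 4 * ((v + 1)^2 + 3 * int i ^ 2)" .
      then show ?thesis by (intro exI[of _ "v + 1"]) simp
    next
      case 2
      have "4 * int p = (v - 8)^2 + 3 * v^2" using K1 2(1) by simp
      also have "\<dots> = 4 * ((v - 2)^2 + 3 * int i ^ 2)" using 2(2) by (simp add: power2_eq_square algebra_simps)
      finally have "4 * int p = 4 * ((v - 2)^2 + 3 * int i ^ 2)" .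
      then show ?thesis by (intro exI[of _ "v - 2"]) simp
    next
      case 3
      have "4 * int p = (4 - v)^2 + 3 * v^2" using K1 3(1) by simp
      also have "\<dots> = 4 * ((v - 1)^2 + 3 * int i ^ 2)" using 3(2) by (simp add: power2_eq_square algebra_simps)
      finally have "4 * int p = 4 * ((v - 1)^2 + 3 * int i ^ 2)" .
      then show ?thesis by (intro exI[of _ "v - 1"]) simp
    next
      case 4
      have "4 * int p = (-v - 8)^2 + 3 * v^2" using K1 4(1) by simp
      also have "\<dots> = 4 * ((v + 2)^2 + 3 * int i ^ 2)" using 4(2) by (simp add: power2_eq_square algebra_simps)
      finally have "4 * int p = 4 * ((v + 2)^2 + 3 * int i ^ 2)" .
      then show ?thesis by (intro exI[of _ "v + 2"]) simp
    qed
  qed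
  have bwd: "u - v = 16 - 12 * int i \<or> u + v = 16 - 12 * int i" if "\<exists>t::int. int p = t ^ 2 + 3 * int i ^ 2"
  proof -
    from that obtain t :: int where "int p = t ^ 2 + 3 * int i ^ 2" by blast
    then show ?thesis using rep_main[OF pr _ K1 um vm i] by simp
  qed
  show ?thesis
    unfolding e1 e2 e3 A_def[symmetric] B_def[symmetric] C_def[symmetric] card_eq
    using eqB eqC fwd bwd by auto
qed

end
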